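(* Let $\mathbb{G}$ be a finitely generated abelian group, $A$ a commutative ring, and $B=A[T_1,\dots,T_r]$ a $\mathbb{G}$-graded polynomial ring over $A$ (with $A$ in degree $0$ and each $T_i$ homogeneous). Let $\mathbb{M}$ be a finitely generated $\mathbb{G}$-graded $B$-module. Let $\Gamma$ be the set of subsets of $\{\deg_{\mathbb{G}}(T_i)\}_{i=1}^r$ that are linearly independent. Then there exist finitely many pairs $(\delta_p,E_p)\in\mathbb{G}\times\Gamma$, $p=1,\dots,m$, such that $$\operatorname{supp}_{\mathbb{G}}(\mathbb{M})=\bigcup_{p=1}^m\big(\delta_p+\langle E_p\rangle\big),$$ where $\langle E_p\rangle$ denotes the submonoid of $\mathbb{G}$ generated by $E_p$.
   Context: A subset $E$ of an abelian group is linearly independent if it forms a basis of a free submonoid, i.e. the map $\mathbb{N}^{(E)}\to\mathbb{G}$, $(c_e)\mapsto\sum_e c_e e$, is injective (the empty set is allowed, with $\langle\emptyset\rangle=\{0\}$). $\operatorname{supp}_{\mathbb{G}}(\mathbb{M})=\{\gamma\in\mathbb{G}:\mathbb{M}_\gamma\neq 0\}$. *)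

theory Defs
  imports Main "HOL.Modules" "HOL-Library.Poly_Mapping"
begin

primrec nmul :: "nat \<Rightarrow> 'g::monoid_add \<Rightarrow> 'g" where
  "nmul 0 g = 0"
| "nmul (Suc n) g = g + nmul n g"

inductive_set submonoid_gen :: "'g::monoid_add set \<Rightarrow> 'g set" for E where
  zero: "0 \<in> submonoid_gen E"
| step: "x \<in> submonoid_gen E \<Longrightarrow> e \<in> E \<Longrightarrow> x + e \<in> submonoid_gen E"

text \<open>Finitely generated abelian group: generated as a monoid by a finite S together with -S,
  i.e. generated as a group by the finite set S.\<close>
definition fg_abelian_group :: "'g::ab_group_add itself \<Rightarrow> bool" where
  "fg_abelian_group _ \<longleftrightarrow> (\<exists>S::'g set. finite S \<and> submonoid_gen (S \<union> uminus ` S) = UNIV)"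

definition lin_indep :: "'g::comm_monoid_add set \<Rightarrow> bool" where
  "lin_indep E \<longleftrightarrow>
     (\<forall>c d :: 'g \<Rightarrow> nat.
        finite {e. c e \<noteq> 0} \<and> finite {e. d e \<noteq> 0} \<and>
        {e. c e \<noteq> 0} \<subseteq> E \<and> {e. d e \<noteq> 0} \<subseteq> E \<and>
        (\<Sum>e\<in>{e. c e \<noteq> 0}. nmul (c e) e) = (\<Sum>e\<in>{e. d e \<noteq> 0}. nmul (d e) e)
        \<longrightarrow> c = d)"

text \<open>Polynomial ring A[T_v | v :: 'v] is the type of finitely supported maps from monomials to a.
  G-degree of a monomial, given the degrees deg v of the variables T_v.\<close>
definition mdeg :: "('v \<Rightarrow> 'g::comm_monoid_add) \<Rightarrow> ('v \<Rightarrow>\<^sub>0 nat) \<Rightarrow> 'g" where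
  "mdeg deg m = (\<Sum>v\<in>Poly_Mapping.keys m. nmul (Poly_Mapping.lookup m v) (deg v))"

definition hom_poly :: "('v \<Rightarrow> 'g::comm_monoid_add) \<Rightarrow> 'g \<Rightarrow> (('v \<Rightarrow>\<^sub>0 nat) \<Rightarrow>\<^sub>0 'a::zero) set" where
  "hom_poly deg \<gamma> = {p. \<forall>m\<in>Poly_Mapping.keys p. mdeg deg m = \<gamma>}"

definition graded_module ::
  "('v \<Rightarrow> 'g::comm_monoid_add) \<Rightarrow> ((('v \<Rightarrow>\<^sub>0 nat) \<Rightarrow>\<^sub>0 'a::comm_ring_1) \<Rightarrow> 'm \<Rightarrow> 'm::ab_group_add)
     \<Rightarrow> ('g \<Rightarrow> 'm set) \<Rightarrow> bool" where
  "graded_module deg scale Mg \<longleftrightarrow>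
     module scale \<and>
     (\<forall>\<gamma>. 0 \<in> Mg \<gamma> \<and> (\<forall>x\<in>Mg \<gamma>. \<forall>y\<in>Mg \<gamma>. x + y \<in> Mg \<gamma> \<and> - x \<in> Mg \<gamma>)) \<and>
     (\<forall>\<gamma> \<delta> b x. b \<in> hom_poly deg \<gamma> \<longrightarrow> x \<in> Mg \<delta> \<longrightarrow> scale b x \<in> Mg (\<gamma> + \<delta>)) \<and>
     (\<forall>x. \<exists>!f. finite {\<gamma>. f \<gamma> \<noteq> 0} \<and> (\<forall>\<gamma>. f \<gamma> \<in> Mg \<gamma>) \<and> x = (\<Sum>\<gamma>\<in>{\<gamma>. f \<gamma> \<noteq> 0}. f \<gamma>))"

definition fg_module :: "('r::comm_ring_1 \<Rightarrow> 'm \<Rightarrow> 'm::ab_group_add) \<Rightarrow> bool" where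
  "fg_module scale \<longleftrightarrow> (\<exists>X. finite X \<and> module.span scale X = UNIV)"

definition graded_supp :: "('g \<Rightarrow> 'm::zero set) \<Rightarrow> 'g set" where
  "graded_supp Mg = {\<gamma>. Mg \<gamma> \<noteq> {0}}"

end

theory Submission
  imports Defs Complex_Main
begin


lemma nmul_add: "nmul (a + b) g = nmul a g + nmul b (g::'g::comm_monoid_add)"
  by (induction a) (simp_all add: add.assoc)

lemma nmul_zero_g[simp]: "nmul n (0::'g::monoid_add) = 0"
  by (induction n) simp_all

lemma smg_add:
  assumes "x \<in> submonoid_gen E" "y \<in> submonoid_gen E"
  shows "x + y \<in> submonoid_gen (E::'g::comm_monoid_add set)"
  using assms(2)
proof induction
  case zero then show ?case using assms(1) by simp
next
  case (step y e)
  then show ?case by (metis add.assoc submonoid_gen.step)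
qed

lemma smg_mono: "E \<subseteq> F \<Longrightarrow> submonoid_gen E \<subseteq> submonoid_gen F"
proof
  fix x assume EF: "E \<subseteq> F" and "x \<in> submonoid_gen E"
  from this(2) show "x \<in> submonoid_gen F"
    by (induction rule: submonoid_gen.induct) (use EF in \<open>auto intro: submonoid_gen.intros\<close>)
qed

lemma smg_base: "e \<in> E \<Longrightarrow> e \<in> submonoid_gen (E::'g::comm_monoid_add set)"
  using submonoid_gen.step[OF submonoid_gen.zero] by fastforce

lemma smg_nmul: "e \<in> E \<Longrightarrow> nmul n e \<in> submonoid_gen (E::'g::comm_monoid_add set)"
  by (induction n) (auto intro: submonoid_gen.zero smg_add smg_base)

lemma smg_sum: "(\<And>i. i \<in> I \<Longrightarrow> f i \<in> submonoid_gen E) \<Longrightarrow> sum f I \<in> submonoid_gen (E::'g::comm_monoid_add set)"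
  by (induction I rule: infinite_finite_induct) (auto intro: submonoid_gen.zero smg_add)

lemma smg_repr:
  fixes g :: "'i \<Rightarrow> 'g::comm_monoid_add"
  assumes "finite I"
  shows "submonoid_gen (g ` I) = {\<Sum>i\<in>I. nmul (c i) (g i) | c. True}"
proof
  show "submonoid_gen (g ` I) \<subseteq> {\<Sum>i\<in>I. nmul (c i) (g i) | c. True}"
  proof
    fix x assume "x \<in> submonoid_gen (g ` I)"
    then show "x \<in> {\<Sum>i\<in>I. nmul (c i) (g i) | c. True}"
    proof induction
      case zero
      show ?case by (rule CollectI, rule exI[of _ "\<lambda>_. 0"]) simp
    next
      case (step x e)
      then obtain c where c: "x = (\<Sum>i\<in>I. nmul (c i) (g i))" by blast
      from step obtain i where i: "i \<in> I" "e = g i" by blast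
      define c' where "c' = c(i := Suc (c i))"
      have "(\<Sum>j\<in>I. nmul (c' j) (g j)) = nmul (c' i) (g i) + (\<Sum>j\<in>I-{i}. nmul (c' j) (g j))"
        using assms i by (simp add: sum.remove)
      also have "\<dots> = g i + (nmul (c i) (g i) + (\<Sum>j\<in>I-{i}. nmul (c j) (g j)))"
      proof -
        have "(\<Sum>j\<in>I-{i}. nmul (c' j) (g j)) = (\<Sum>j\<in>I-{i}. nmul (c j) (g j))"
          by (rule sum.cong) (auto simp: c'_def)
        moreover have "nmul (c' i) (g i) = g i + nmul (c i) (g i)" by (simp add: c'_def)
        ultimately show ?thesis by (simp add: add.assoc)
      qed
      also have "nmul (c i) (g i) + (\<Sum>j\<in>I-{i}. nmul (c j) (g j)) = x"
        using assms i c by (simp add: sum.remove)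
      finally have "x + e = (\<Sum>j\<in>I. nmul (c' j) (g j))" using i by (simp add: add.commute)
      then show ?case by blast
    qed
  qed
next
  show "{\<Sum>i\<in>I. nmul (c i) (g i) | c. True} \<subseteq> submonoid_gen (g ` I)"
    by (auto intro!: smg_sum smg_nmul imageI)
qed

definition good :: "('v \<Rightarrow> 'g::ab_group_add) \<Rightarrow> 'g set \<Rightarrow> bool" where
  "good deg X \<longleftrightarrow> (\<exists>P :: ('g \<times> 'g set) set. finite P \<and>
           (\<forall>(\<delta>, E)\<in>P. E \<subseteq> range deg \<and> lin_indep E) \<and>
           X = (\<Union>(\<delta>, E)\<in>P. (\<lambda>x. \<delta> + x) ` submonoid_gen E))"

lemma good_translate:
  assumes "good deg X" shows "good deg ((\<lambda>x. d + x) ` X)"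
proof -
  obtain P where P: "finite P" "\<forall>(\<delta>, E)\<in>P. E \<subseteq> range deg \<and> lin_indep E"
    "X = (\<Union>(\<delta>, E)\<in>P. (\<lambda>x. \<delta> + x) ` submonoid_gen E)"
    using assms unfolding good_def by blast
  let ?P = "(\<lambda>(\<delta>,E). (d + \<delta>, E)) ` P"
  have "(\<lambda>x. d + x) ` X = (\<Union>(\<delta>, E)\<in>?P. (\<lambda>x. \<delta> + x) ` submonoid_gen E)"
  proof -
    have "(\<lambda>x. d + x) ` X = (\<Union>(\<delta>, E)\<in>P. (\<lambda>x. (d + \<delta>) + x) ` submonoid_gen E)"
      unfolding P(3) image_UN by (simp add: image_image add.assoc case_prod_beta)
    also have "\<dots> = (\<Union>(\<delta>, E)\<in>?P. (\<lambda>x. \<delta> + x) ` submonoid_gen E)"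
      by (simp add: case_prod_beta)
    finally show ?thesis .
  qed
  then show ?thesis unfolding good_def using P(1,2) by (intro exI[of _ ?P]) auto
qed

lemma good_UN:
  assumes "finite I" "\<And>i. i \<in> I \<Longrightarrow> good deg (X i)"
  shows "good deg (\<Union>i\<in>I. X i)"
proof -
  from assms(2) have "\<forall>i\<in>I. \<exists>P. finite P \<and> (\<forall>(\<delta>, E)\<in>P. E \<subseteq> range deg \<and> lin_indep E) \<and>
           X i = (\<Union>(\<delta>, E)\<in>P. (\<lambda>x. \<delta> + x) ` submonoid_gen E)"
    unfolding good_def by blast
  then obtain P where P: "\<forall>i \<in> I. finite (P i) \<and> (\<forall>(\<delta>, E)\<in>P i. E \<subseteq> range deg \<and> lin_indep E) \<and>
           X i = (\<Union>(\<delta>, E)\<in>P i. (\<lambda>x. \<delta> + x) ` submonoid_gen E)"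
    by (rule bchoice[THEN exE])
  let ?Q = "\<Union>i\<in>I. P i"
  have fin: "finite ?Q" using P assms(1) by simp
  have pr: "\<forall>(\<delta>, E)\<in>?Q. E \<subseteq> range deg \<and> lin_indep E" using P by blast
  have "(\<Union>i\<in>I. X i) = (\<Union>i\<in>I. \<Union>(\<delta>, E)\<in>P i. (\<lambda>x. \<delta> + x) ` submonoid_gen E)"
    using P by (intro SUP_cong) simp_all
  also have "\<dots> = (\<Union>(\<delta>, E)\<in>?Q. (\<lambda>x. \<delta> + x) ` submonoid_gen E)"
    by blast
  finally show ?thesis unfolding good_def using fin pr by blast
qed

lemma key_cover:
  fixes F :: "'g::ab_group_add set" and a b :: "'g \<Rightarrow> nat"
  assumes fin: "finite F"
    and disj: "\<forall>e\<in>F. 0 < a e \<longrightarrow> b e = 0"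
    and eq: "(\<Sum>e\<in>F. nmul (a e) e) = (\<Sum>e\<in>F. nmul (b e) e)"
    and e0: "e0 \<in> F" "0 < a e0"
  shows "submonoid_gen F \<subseteq> (\<Union>e\<in>{e\<in>F. 0 < a e}. \<Union>j\<in>{..<a e}. (\<lambda>x. nmul j e + x) ` submonoid_gen (F - {e}))"
    (is "_ \<subseteq> ?R")
proof -
  let ?A = "{e\<in>F. 0 < a e}"
  have finA: "finite ?A" using fin by simp
  have main: "\<forall>n. (\<Sum>e\<in>?A. n e) = k \<longrightarrow> (\<Sum>e\<in>F. nmul (n e) e) \<in> ?R" for k
  proof (induction k rule: less_induct)
    case (less k)
    show ?case
    proof (intro allI impI)
      fix n assume nk: "(\<Sum>e\<in>?A. n e) = k"
      show "(\<Sum>e\<in>F. nmul (n e) e) \<in> ?R"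
      proof (cases "\<exists>e\<in>?A. n e < a e")
        case True
        then obtain e where e: "e \<in> F" "0 < a e" "n e < a e" by auto
        have "(\<Sum>e'\<in>F. nmul (n e') e') = nmul (n e) e + (\<Sum>e'\<in>F-{e}. nmul (n e') e')"
          using fin e by (simp add: sum.remove)
        moreover have "(\<Sum>e'\<in>F-{e}. nmul (n e') e') \<in> submonoid_gen (F - {e})"
          using smg_repr[of "F-{e}" id] fin by auto
        ultimately have "(\<Sum>e'\<in>F. nmul (n e') e') \<in> (\<lambda>x. nmul (n e) e + x) ` submonoid_gen (F - {e})"
          by blast
        moreover have "e \<in> ?A" "n e \<in> {..<a e}" using e by auto
        ultimately show ?thesis by blast
      next
        case False
        hence ge: "\<forall>e\<in>F. a e \<le> n e" by fastforce
        define n' where "n' e = n e - a e + b e" for e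
        have s1: "(\<Sum>e\<in>F. nmul (n e) e) = (\<Sum>e\<in>F. nmul (n e - a e) e) + (\<Sum>e\<in>F. nmul (a e) e)"
        proof -
          have "(\<Sum>e\<in>F. nmul (n e) e) = (\<Sum>e\<in>F. nmul (n e - a e) e + nmul (a e) e)"
          proof (rule sum.cong)
            fix e assume "e \<in> F"
            then have h: "n e = (n e - a e) + a e" using ge by auto
            have "nmul (n e) e = nmul ((n e - a e) + a e) e" using h by (rule arg_cong)
            then show "nmul (n e) e = nmul (n e - a e) e + nmul (a e) e"
              by (simp only: nmul_add)
          qed simp
          then show ?thesis by (simp add: sum.distrib)
        qed
        have s2: "(\<Sum>e\<in>F. nmul (n' e) e) = (\<Sum>e\<in>F. nmul (n e - a e) e) + (\<Sum>e\<in>F. nmul (b e) e)"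
          by (simp add: n'_def nmul_add sum.distrib)
        have "(\<Sum>e\<in>F. nmul (n e) e) = (\<Sum>e\<in>F. nmul (n' e) e)" using s1 s2 eq by simp
        moreover have "(\<Sum>e\<in>?A. n' e) < k"
        proof -
          have "(\<Sum>e\<in>?A. n' e) < (\<Sum>e\<in>?A. n e)"
          proof (rule sum_strict_mono_ex1[OF finA])
            show "\<forall>x\<in>?A. n' x \<le> n x" using disj by (auto simp: n'_def)
            show "\<exists>x\<in>?A. n' x < n x"
              using e0 disj ge by (intro bexI[of _ e0]) (auto simp: n'_def)
          qed
          then show ?thesis using nk by simp
        qed
        moreover have "(\<Sum>e\<in>F. nmul (n' e) e) \<in> ?R"
          using less.IH[OF \<open>(\<Sum>e\<in>?A. n' e) < k\<close>] by blast
        ultimately show ?thesis by simp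
      qed
    qed
  qed
  show ?thesis
  proof
    fix x assume "x \<in> submonoid_gen F"
    then obtain n where "x = (\<Sum>e\<in>F. nmul (n e) e)"
      using smg_repr[of F id] fin by auto
    then show "x \<in> ?R" using main by blast
  qed
qed

lemma sum_supp_F:
  assumes "finite F" "{e. f e \<noteq> 0} \<subseteq> F"
  shows "(\<Sum>e\<in>{e. f e \<noteq> 0}. nmul (f e) (e::'g::comm_monoid_add)) = (\<Sum>e\<in>F. nmul (f e) e)"
  by (rule sum.mono_neutral_left) (use assms in auto)

lemma cara:
  fixes deg :: "'v \<Rightarrow> 'g::ab_group_add"
  shows "finite F \<Longrightarrow> F \<subseteq> range deg \<Longrightarrow> good deg (submonoid_gen F)"
proof (induction "card F" arbitrary: F rule: less_induct)
  case less
  show ?case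
  proof (cases "lin_indep F")
    case True
    show ?thesis unfolding good_def
      by (intro exI[of _ "{(0,F)}"]) (use True less.prems in auto)
  next
    case False
    then obtain c d :: "'g \<Rightarrow> nat" where cd: "{e. c e \<noteq> 0} \<subseteq> F" "{e. d e \<noteq> 0} \<subseteq> F"
      "(\<Sum>e\<in>{e. c e \<noteq> 0}. nmul (c e) e) = (\<Sum>e\<in>{e. d e \<noteq> 0}. nmul (d e) e)" "c \<noteq> d"
      unfolding lin_indep_def by blast
    have eqF: "(\<Sum>e\<in>F. nmul (c e) e) = (\<Sum>e\<in>F. nmul (d e) e)"
      using cd sum_supp_F[OF less.prems(1) cd(1)] sum_supp_F[OF less.prems(1) cd(2)] by simp
    define a where "a e = c e - d e" for e
    define b where "b e = d e - c e" for e
    define m where "m e = min (c e) (d e)" for e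
    have "(\<Sum>e\<in>F. nmul (c e) e) = (\<Sum>e\<in>F. nmul (a e) e) + (\<Sum>e\<in>F. nmul (m e) e)"
    proof -
      have "(\<Sum>e\<in>F. nmul (c e) e) = (\<Sum>e\<in>F. nmul (a e) e + nmul (m e) e)"
      proof (rule sum.cong)
        fix e
        have "c e = a e + m e" by (simp add: a_def m_def)
        then have "nmul (c e) e = nmul (a e + m e) e" by (rule arg_cong)
        then show "nmul (c e) e = nmul (a e) e + nmul (m e) e" by (simp only: nmul_add)
      qed simp
      then show ?thesis by (simp add: sum.distrib)
    qed
    moreover have "(\<Sum>e\<in>F. nmul (d e) e) = (\<Sum>e\<in>F. nmul (b e) e) + (\<Sum>e\<in>F. nmul (m e) e)"
    proof -
      have "(\<Sum>e\<in>F. nmul (d e) e) = (\<Sum>e\<in>F. nmul (b e) e + nmul (m e) e)"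
      proof (rule sum.cong)
        fix e
        have "d e = b e + m e" by (simp add: b_def m_def)
        then have "nmul (d e) e = nmul (b e + m e) e" by (rule arg_cong)
        then show "nmul (d e) e = nmul (b e) e + nmul (m e) e" by (simp only: nmul_add)
      qed simp
      then show ?thesis by (simp add: sum.distrib)
    qed
    ultimately have eqab: "(\<Sum>e\<in>F. nmul (a e) e) = (\<Sum>e\<in>F. nmul (b e) e)" using eqF by simp
    obtain e1 where e1: "a e1 \<noteq> b e1"
    proof -
      have "a \<noteq> b"
      proof
        assume "a = b"
        have "c e = d e" for e
        proof -
          from \<open>a = b\<close> have "a e = b e" by simp
          then show "c e = d e" unfolding a_def b_def by arith
        qed
        then show False using cd(4) by blast
      qed
      then show ?thesis using that by blast
    qed
    have e1F: "e1 \<in> F"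
    proof (cases "c e1 = 0")
      case True
      then have "d e1 \<noteq> 0" using e1 by (simp add: a_def b_def)
      then show ?thesis using cd(2) by blast
    next
      case False
      then show ?thesis using cd(1) by blast
    qed
    have "\<exists>a' b' e0. (\<forall>e\<in>F. 0 < a' e \<longrightarrow> b' e = 0) \<and>
        (\<Sum>e\<in>F. nmul (a' e) e) = (\<Sum>e\<in>F. nmul (b' e) e) \<and> e0 \<in> F \<and> 0 < a' e0"
    proof (cases "0 < a e1")
      case True
      then show ?thesis using eqab e1F
        by (intro exI[of _ a] exI[of _ b] exI[of _ e1]) (auto simp: a_def b_def)
    next
      case False
      then have "0 < b e1" using e1 by simp
      then show ?thesis using eqab e1F
        by (intro exI[of _ b] exI[of _ a] exI[of _ e1]) (auto simp: a_def b_def)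
    qed
    then obtain a' b' e0 where ab': "\<forall>e\<in>F. 0 < a' e \<longrightarrow> b' e = 0"
        "(\<Sum>e\<in>F. nmul (a' e) e) = (\<Sum>e\<in>F. nmul (b' e) e)" "e0 \<in> F" "0 < a' e0"
      by blast
    let ?R = "(\<Union>e\<in>{e\<in>F. 0 < a' e}. \<Union>j\<in>{..<a' e}. (\<lambda>x. nmul j e + x) ` submonoid_gen (F - {e}))"
    have "submonoid_gen F \<subseteq> ?R" by (rule key_cover[OF less.prems(1) ab'])
    moreover have "?R \<subseteq> submonoid_gen F"
    proof safe
      fix e j x assume "e \<in> F" "x \<in> submonoid_gen (F - {e})"
      then show "nmul j e + x \<in> submonoid_gen F"
        using smg_mono[of "F - {e}" F] by (auto intro!: smg_add smg_nmul)
    qed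
    ultimately have eqR: "submonoid_gen F = ?R" by blast
    have "good deg ?R"
    proof (intro good_UN)
      show "finite {e\<in>F. 0 < a' e}" using less.prems(1) by simp
      show "finite {..<a' e}" for e by simp
      fix e j assume "e \<in> {e\<in>F. 0 < a' e}"
      then have "card (F - {e}) < card F" using less.prems(1)
        by (intro card_Diff1_less) auto
      then have "good deg (submonoid_gen (F - {e}))"
        using less.hyps less.prems by blast
      then show "good deg ((\<lambda>x. nmul j e + x) ` submonoid_gen (F - {e}))"
        by (rule good_translate)
    qed
    then show ?thesis using eqR by simp
  qed
qed



lemma nat_mono_subseq:
  fixes g :: "nat \<Rightarrow> nat"
  shows "\<exists>r. strict_mono r \<and> (\<forall>i j::nat. i \<le> j \<longrightarrow> g (r i) \<le> g (r j))"
proof -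
  obtain f where f: "strict_mono f" "monoseq (\<lambda>n. g (f n))" using seq_monosub by blast
  show ?thesis
  proof (cases "\<forall>m. \<forall>n\<ge>m. g (f m) \<le> g (f n)")
    case True then show ?thesis using f(1) by (intro exI[of _ f]) simp
  next
    case False
    then have anti: "\<forall>m. \<forall>n\<ge>m. g (f n) \<le> g (f m)" using f(2) unfolding monoseq_def by blast
    define h where "h n = g (f n)" for n
    have "(LEAST x. x \<in> range h) \<in> range h" by (rule LeastI[of _ "h 0"]) simp
    then obtain N where N: "h N = (LEAST x. x \<in> range h)" by (auto simp del: range_eqI)
    have const: "h n = h N" if "N \<le> n" for n
    proof -
      have "h n \<le> h N" using anti that unfolding h_def by blast
      moreover have "h N \<le> h n" unfolding N by (rule Least_le) simp
      ultimately show "h n = h N" by simp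
    qed
    show ?thesis
    proof (intro exI[of _ "\<lambda>n. f (n + N)"] conjI allI impI)
      show "strict_mono (\<lambda>n. f (n + N))" using f(1) by (simp add: strict_mono_def)
      fix i j :: nat
      have "g (f (i + N)) = h N" using const[of "i + N"] by (simp add: h_def)
      moreover have "g (f (j + N)) = h N" using const[of "j + N"] by (simp add: h_def)
      ultimately show "g (f (i + N)) \<le> g (f (j + N))" by simp
    qed
  qed
qed

lemma dickson_sub:
  fixes f :: "nat \<Rightarrow> 'v \<Rightarrow> nat"
  assumes "finite K"
  shows "\<exists>r. strict_mono r \<and> (\<forall>v\<in>K. \<forall>i j::nat. i \<le> j \<longrightarrow> f (r i) v \<le> f (r j) v)"
  using assms
proof (induction K)
  case empty show ?case by (intro exI[of _ "id::nat\<Rightarrow>nat"]) (auto simp: strict_mono_def)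
next
  case (insert v K)
  then obtain r where r: "strict_mono r" "\<forall>w\<in>K. \<forall>i j::nat. i \<le> j \<longrightarrow> f (r i) w \<le> f (r j) w"
    by blast
  obtain r2 where r2: "strict_mono r2" "\<forall>i j::nat. i \<le> j \<longrightarrow> f (r (r2 i)) v \<le> f (r (r2 j)) v"
    using nat_mono_subseq[of "\<lambda>n. f (r n) v"] by blast
  show ?case
  proof (intro exI[of _ "r \<circ> r2"] conjI ballI allI impI)
    show "strict_mono (r \<circ> r2)" using r r2 by (simp add: strict_mono_def)
    fix w i j assume w: "w \<in> insert v K" and ij: "(i::nat) \<le> j"
    have "r2 i \<le> r2 j" using r2(1) ij by (simp add: strict_mono_less_eq)
    show "f ((r \<circ> r2) i) w \<le> f ((r \<circ> r2) j) w"
    proof (cases "w = v")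
      case True
      then show ?thesis using r2(2) ij by simp
    next
      case False
      then have "w \<in> K" using w by simp
      then show ?thesis using r(2) \<open>r2 i \<le> r2 j\<close> by simp
    qed
  qed
qed

lemma dickson_good:
  fixes f :: "nat \<Rightarrow> 'v::finite \<Rightarrow> nat"
  shows "\<exists>i j. i < j \<and> f i \<le> f j"
proof -
  obtain r :: "nat \<Rightarrow> nat" where r: "strict_mono r" "\<forall>v\<in>UNIV. \<forall>i j::nat. i \<le> j \<longrightarrow> f (r i) v \<le> f (r j) v"
    using dickson_sub[of UNIV f, OF finite_UNIV] by blast
  have "r 0 < r 1" using r(1) by (simp add: strict_mono_def)
  moreover have "f (r 0) \<le> f (r 1)" using r(2) by (simp add: le_fun_def)
  ultimately show ?thesis by blast
qed

definition minimals :: "('v \<Rightarrow> nat) set \<Rightarrow> ('v \<Rightarrow> nat) set" where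
  "minimals U = {u\<in>U. \<forall>u'\<in>U. u' \<le> u \<longrightarrow> u' = u}"

lemma minimals_finite: "finite (minimals (U :: ('v::finite \<Rightarrow> nat) set))"
proof (rule ccontr)
  assume "infinite (minimals U)"
  then obtain f :: "nat \<Rightarrow> _" where f: "inj f" "range f \<subseteq> minimals U"
    using infinite_countable_subset by blast
  obtain i j where ij: "i < j" "f i \<le> f j" using dickson_good[of f] by blast
  have "f j \<in> minimals U" "f i \<in> U" using f(2) unfolding minimals_def by auto
  then have "f i = f j" using ij(2) unfolding minimals_def by blast
  then have "i = j" using f(1) by (simp add: inj_eq)
  then show False using ij(1) by simp
qed

lemma minimals_below:
  fixes U :: "('v::finite \<Rightarrow> nat) set"
  shows "u \<in> U \<Longrightarrow> \<exists>m\<in>minimals U. m \<le> u"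
proof (induction "sum u UNIV" arbitrary: u rule: less_induct)
  case less
  show ?case
  proof (cases "u \<in> minimals U")
    case True then show ?thesis by auto
  next
    case False
    then obtain u' where u': "u' \<in> U" "u' \<le> u" "u' \<noteq> u" using less.prems unfolding minimals_def by auto
    have "sum u' UNIV < sum u UNIV"
    proof (rule sum_strict_mono_ex1)
      show "\<forall>x\<in>UNIV. u' x \<le> u x" using u'(2) by (simp add: le_fun_def)
      from u'(3) obtain x where "u' x \<noteq> u x" by auto
      moreover have "u' x \<le> u x" using u'(2) by (simp add: le_fun_def)
      ultimately show "\<exists>x\<in>UNIV. u' x < u x" by (intro bexI[of _ x]) auto
    qed simp
    then obtain m where "m \<in> minimals U" "m \<le> u'" using less.hyps u'(1) by blast
    then show ?thesis using u'(2) order_trans by blast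
  qed
qed

lemma downclosed_repr:
  fixes S :: "('v::finite \<Rightarrow> nat) set"
  assumes dc: "\<And>t s. t \<in> S \<Longrightarrow> s \<le> t \<Longrightarrow> s \<in> S"
  shows "S = {t. \<forall>m\<in>minimals (-S). \<not> m \<le> t}"
proof safe
  fix t m assume "t \<in> S" "m \<in> minimals (-S)" "m \<le> t"
  then show False using dc unfolding minimals_def by blast
next
  fix t assume "\<forall>m\<in>minimals (-S). \<not> m \<le> t"
  then show "t \<in> S" using minimals_below[of t "-S"] by blast
qed

definition box :: "'v set \<Rightarrow> ('v \<Rightarrow> nat) \<Rightarrow> ('v \<Rightarrow> nat) set" where
  "box W a = {t. \<forall>w\<in>W. t w = a w}"

lemma avoid_boxes:
  fixes M :: "('v::finite \<Rightarrow> nat) set"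
  assumes "finite M"
  shows "\<exists>Q. finite Q \<and> {t. \<forall>m\<in>M. \<not> m \<le> t} = (\<Union>(W,a)\<in>Q. box W a)"
  using assms
proof (induction M)
  case empty show ?case by (intro exI[of _ "{({}, \<lambda>_. 0)}"]) (auto simp: box_def)
next
  case (insert u M)
  then obtain Q where Q: "finite Q" "{t. \<forall>m\<in>M. \<not> m \<le> t} = (\<Union>(W,a)\<in>Q. box W a)" by blast
  define Z where "Z = {((W,a),v,j). (W,a) \<in> Q \<and> j < u v \<and> (v \<notin> W \<or> a v = j)}"
  define Q' where "Q' = (\<lambda>((W,a),v,j). (insert v W, a(v:=j))) ` Z"
  have "Z \<subseteq> Q \<times> (SIGMA v:UNIV. {..<u v})" unfolding Z_def by auto
  moreover have "finite (Q \<times> (SIGMA v:UNIV. {..<u v}))" using Q(1) by (intro finite_SigmaI) auto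
  ultimately have "finite Z" by (rule finite_subset)
  then have finQ': "finite Q'" unfolding Q'_def by simp
  have "{t. \<forall>m\<in>insert u M. \<not> m \<le> t} = (\<Union>(W,a)\<in>Q'. box W a)"
  proof (rule set_eqI, rule iffI)
    fix t assume "t \<in> {t. \<forall>m\<in>insert u M. \<not> m \<le> t}"
    then have nu: "\<not> u \<le> t" and tM: "t \<in> {t. \<forall>m\<in>M. \<not> m \<le> t}" by auto
    from nu obtain v where v: "t v < u v" by (auto simp: le_fun_def not_le)
    from tM Q(2) obtain W a where Wa: "(W,a) \<in> Q" "t \<in> box W a" by auto
    have "((W,a),v,t v) \<in> Z" using Wa v by (auto simp: Z_def box_def)
    then have "(insert v W, a(v := t v)) \<in> Q'" unfolding Q'_def by (rule image_eqI[rotated]) simp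
    moreover have "t \<in> box (insert v W) (a(v := t v))" using Wa(2) by (auto simp: box_def)
    ultimately show "t \<in> (\<Union>(W,a)\<in>Q'. box W a)" by blast
  next
    fix t assume "t \<in> (\<Union>(W,a)\<in>Q'. box W a)"
    then obtain W a v j where z: "((W,a),v,j) \<in> Z" and tb: "t \<in> box (insert v W) (a(v:=j))"
      unfolding Q'_def by auto
    from z have zz: "(W,a) \<in> Q" "j < u v" "v \<notin> W \<or> a v = j" by (auto simp: Z_def)
    have "t \<in> box W a"
      unfolding box_def
    proof safe
      fix w assume "w \<in> W"
      then show "t w = a w" using tb zz(3) by (cases "w = v") (auto simp: box_def)
    qed
    then have "t \<in> {t. \<forall>m\<in>M. \<not> m \<le> t}" using Q(2) zz(1) by blast
    moreover have "t v < u v" using tb zz(2) by (simp add: box_def)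
    then have "\<not> u \<le> t" by (auto simp: le_fun_def not_le)
    ultimately show "t \<in> {t. \<forall>m\<in>insert u M. \<not> m \<le> t}" by blast
  qed
  then show ?case using finQ' by blast
qed

definition md :: "('v \<Rightarrow> 'g::comm_monoid_add) \<Rightarrow> ('v \<Rightarrow> nat) \<Rightarrow> 'g" where
  "md deg t = (\<Sum>v\<in>UNIV. nmul (t v) (deg v))"

lemma md_split:
  fixes deg :: "'v::finite \<Rightarrow> 'g::comm_monoid_add"
  shows "md deg t = (\<Sum>v\<in>W. nmul (t v) (deg v)) + (\<Sum>v\<in>-W. nmul (t v) (deg v))"
  unfolding md_def using sum.Int_Diff[of UNIV "\<lambda>v. nmul (t v) (deg v)" W]
  by (simp add: Compl_eq_Diff_UNIV)

lemma box_image: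
  fixes deg :: "'v::finite \<Rightarrow> 'g::ab_group_add"
  shows "md deg ` box W a = (\<lambda>x. (\<Sum>v\<in>W. nmul (a v) (deg v)) + x) ` submonoid_gen (deg ` (-W))"
proof -
  have rep: "submonoid_gen (deg ` (-W)) = {\<Sum>v\<in>-W. nmul (c v) (deg v) | c. True}"
    by (rule smg_repr) simp
  show ?thesis
  proof
    show "md deg ` box W a \<subseteq> (\<lambda>x. (\<Sum>v\<in>W. nmul (a v) (deg v)) + x) ` submonoid_gen (deg ` (-W))"
    proof
      fix y assume "y \<in> md deg ` box W a"
      then obtain t where t: "t \<in> box W a" "y = md deg t" by blast
      have "(\<Sum>v\<in>W. nmul (t v) (deg v)) = (\<Sum>v\<in>W. nmul (a v) (deg v))"
        using t(1) by (intro sum.cong) (auto simp: box_def)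
      then have "y = (\<Sum>v\<in>W. nmul (a v) (deg v)) + (\<Sum>v\<in>-W. nmul (t v) (deg v))"
        using t(2) md_split[of deg t W] by simp
      moreover have "(\<Sum>v\<in>-W. nmul (t v) (deg v)) \<in> submonoid_gen (deg ` (-W))"
        unfolding rep by blast
      ultimately show "y \<in> (\<lambda>x. (\<Sum>v\<in>W. nmul (a v) (deg v)) + x) ` submonoid_gen (deg ` (-W))"
        by blast
    qed
  next
    show "(\<lambda>x. (\<Sum>v\<in>W. nmul (a v) (deg v)) + x) ` submonoid_gen (deg ` (-W)) \<subseteq> md deg ` box W a"
    proof
      fix y assume "y \<in> (\<lambda>x. (\<Sum>v\<in>W. nmul (a v) (deg v)) + x) ` submonoid_gen (deg ` (-W))"
      then obtain c where c: "y = (\<Sum>v\<in>W. nmul (a v) (deg v)) + (\<Sum>v\<in>-W. nmul (c v) (deg v))"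
        unfolding rep by blast
      define t where "t v = (if v \<in> W then a v else c v)" for v
      have "t \<in> box W a" by (simp add: box_def t_def)
      moreover have "md deg t = y"
      proof -
        have "(\<Sum>v\<in>W. nmul (t v) (deg v)) = (\<Sum>v\<in>W. nmul (a v) (deg v))"
          by (intro sum.cong) (auto simp: t_def)
        moreover have "(\<Sum>v\<in>-W. nmul (t v) (deg v)) = (\<Sum>v\<in>-W. nmul (c v) (deg v))"
          by (intro sum.cong) (auto simp: t_def)
        ultimately show ?thesis using c md_split[of deg t W] by simp
      qed
      ultimately show "y \<in> md deg ` box W a" by blast
    qed
  qed
qed

lemma downclosed_good:
  fixes S :: "('v::finite \<Rightarrow> nat) set" and deg :: "'v \<Rightarrow> 'g::ab_group_add"
  assumes dc: "\<And>t s. t \<in> S \<Longrightarrow> s \<le> t \<Longrightarrow> s \<in> S"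
  shows "good deg (md deg ` S)"
proof -
  obtain Q where Q: "finite Q" "{t. \<forall>m\<in>minimals (-S). \<not> m \<le> t} = (\<Union>(W,a)\<in>Q. box W a)"
    using avoid_boxes[OF minimals_finite[of "-S"]] by blast
  have S: "S = (\<Union>(W,a)\<in>Q. box W a)" using downclosed_repr[OF dc] Q(2) by simp
  have eq: "md deg ` S = (\<Union>i\<in>Q. md deg ` (case i of (W,a) \<Rightarrow> box W a))"
    unfolding S by (rule image_UN)
  have "good deg (\<Union>i\<in>Q. md deg ` (case i of (W,a) \<Rightarrow> box W a))"
  proof (rule good_UN[OF Q(1)])
    fix i assume "i \<in> Q"
    obtain W a where i: "i = (W,a)" by (cases i)
    have "finite (deg ` (-W))" by simp
    moreover have "deg ` (-W) \<subseteq> range deg" by blast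
    ultimately have "good deg (submonoid_gen (deg ` (-W)))" by (rule cara)
    then have "good deg ((\<lambda>x. (\<Sum>v\<in>W. nmul (a v) (deg v)) + x) ` submonoid_gen (deg ` (-W)))"
      by (rule good_translate)
    then have "good deg (md deg ` box W a)" by (simp only: box_image)
    then show "good deg (md deg ` (case i of (W,a) \<Rightarrow> box W a))" using i by simp
  qed
  then show ?thesis using eq by simp
qed



lemma Mg_sum:
  assumes gm: "graded_module deg scale Mg" and fin: "finite J" and w: "\<forall>i\<in>J. w i \<in> Mg \<delta>"
  shows "sum w J \<in> Mg \<delta>"
  using fin w
proof induction
  case empty then show ?case using gm unfolding graded_module_def by simp
next
  case (insert i J)
  then show ?case using gm unfolding graded_module_def by simp
qed

lemma graded_proj:
  fixes deg :: "'v \<Rightarrow> 'g::ab_group_add"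
    and scale :: "(('v \<Rightarrow>\<^sub>0 nat) \<Rightarrow>\<^sub>0 'a::comm_ring_1) \<Rightarrow> 'm \<Rightarrow> 'm::ab_group_add"
  assumes gm: "graded_module deg scale Mg" and fin: "finite I"
    and y: "y \<in> Mg \<gamma>" "y = (\<Sum>i\<in>I. z i)"
    and z: "\<forall>i\<in>I. z i \<in> Mg (g i)" and z0: "\<forall>i\<in>I. g i = \<gamma> \<longrightarrow> z i = 0"
  shows "y = 0"
proof -
  have zero: "\<And>\<delta>. 0 \<in> Mg \<delta>" using gm unfolding graded_module_def by simp
  have uniq: "\<exists>!f. finite {\<gamma>. f \<gamma> \<noteq> 0} \<and> (\<forall>\<gamma>. f \<gamma> \<in> Mg \<gamma>) \<and> y = (\<Sum>\<gamma>\<in>{\<gamma>. f \<gamma> \<noteq> 0}. f \<gamma>)"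
    using gm unfolding graded_module_def by blast
  define f where "f \<delta> = (\<Sum>i\<in>{i\<in>I. g i = \<delta>}. z i)" for \<delta>
  have fM: "f \<delta> \<in> Mg \<delta>" for \<delta>
    unfolding f_def by (rule Mg_sum[OF gm]) (use fin z in auto)
  have fg: "f \<gamma> = 0" unfolding f_def using z0 by (intro sum.neutral) auto
  have supp: "{\<delta>. f \<delta> \<noteq> 0} \<subseteq> g ` I"
  proof
    fix \<delta> assume "\<delta> \<in> {\<delta>. f \<delta> \<noteq> 0}"
    then have "{i\<in>I. g i = \<delta>} \<noteq> {}" unfolding f_def by fastforce
    then show "\<delta> \<in> g ` I" by blast
  qed
  have finf: "finite {\<delta>. f \<delta> \<noteq> 0}" using finite_subset[OF supp] fin by simp
  have "(\<Sum>\<delta>\<in>{\<delta>. f \<delta> \<noteq> 0}. f \<delta>) = (\<Sum>\<delta>\<in>g ` I. f \<delta>)"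
    by (rule sum.mono_neutral_left) (use fin supp in auto)
  also have "\<dots> = (\<Sum>i\<in>I. z i)" unfolding f_def by (rule sum.image_gen[OF fin, symmetric])
  finally have sf: "y = (\<Sum>\<delta>\<in>{\<delta>. f \<delta> \<noteq> 0}. f \<delta>)" using y(2) by simp
  define f0 where "f0 \<delta> = (if \<delta> = \<gamma> then y else 0)" for \<delta>
  have f0M: "f0 \<delta> \<in> Mg \<delta>" for \<delta> using y(1) zero by (simp add: f0_def)
  have f0s: "{\<delta>. f0 \<delta> \<noteq> 0} \<subseteq> {\<gamma>}" by (auto simp: f0_def)
  then have finf0: "finite {\<delta>. f0 \<delta> \<noteq> 0}" by (rule finite_subset) simp
  have sf0: "y = (\<Sum>\<delta>\<in>{\<delta>. f0 \<delta> \<noteq> 0}. f0 \<delta>)"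
  proof (cases "y = 0")
    case True
    then have "{\<delta>. f0 \<delta> \<noteq> 0} = {}" by (auto simp: f0_def)
    then show ?thesis using True by simp
  next
    case False
    then have "{\<delta>. f0 \<delta> \<noteq> 0} = {\<gamma>}" by (auto simp: f0_def)
    then show ?thesis by (simp add: f0_def)
  qed
  have "f = f0"
    using uniq finf fM sf finf0 f0M sf0 by blast
  then show ?thesis using fg by (simp add: f0_def)
qed

lemma poly_sum_single:
  "p = (\<Sum>k\<in>Poly_Mapping.keys p. Poly_Mapping.single k (Poly_Mapping.lookup p k))"
proof (rule poly_mapping_eqI)
  fix k'
  have "Poly_Mapping.lookup (\<Sum>k\<in>Poly_Mapping.keys p. Poly_Mapping.single k (Poly_Mapping.lookup p k)) k'
      = (\<Sum>k\<in>Poly_Mapping.keys p. if k' = k then Poly_Mapping.lookup p k else 0)"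
    by (simp add: lookup_sum lookup_single when_def eq_commute)
  also have "\<dots> = Poly_Mapping.lookup p k'"
    by (simp add: in_keys_iff)
  finally show "Poly_Mapping.lookup p k' = Poly_Mapping.lookup (\<Sum>k\<in>Poly_Mapping.keys p. Poly_Mapping.single k (Poly_Mapping.lookup p k)) k'"
    by simp
qed

lemma mdeg_md:
  fixes deg :: "'v::finite \<Rightarrow> 'g::comm_monoid_add"
  shows "mdeg deg k = md deg (Poly_Mapping.lookup k)"
  unfolding mdeg_def md_def
  by (rule sum.mono_neutral_left) (auto simp: in_keys_iff)

lemma lookup_Abs_fin[simp]:
  "Poly_Mapping.lookup (Abs_poly_mapping (t :: 'v::finite \<Rightarrow> 'b::zero)) = t"
  by simp

lemma single_hom:
  fixes deg :: "'v::finite \<Rightarrow> 'g::comm_monoid_add"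
  shows "Poly_Mapping.single k (c::'a::comm_ring_1) \<in> hom_poly deg (mdeg deg k)"
  unfolding hom_poly_def by simp



theorem theorem4p3:
  fixes deg :: "'v::finite \<Rightarrow> 'g::ab_group_add"
    and scale :: "(('v \<Rightarrow>\<^sub>0 nat) \<Rightarrow>\<^sub>0 'a::comm_ring_1) \<Rightarrow> 'm \<Rightarrow> 'm::ab_group_add"
    and Mg :: "'g \<Rightarrow> 'm set"
  assumes "fg_abelian_group TYPE('g)"
    and "graded_module deg scale Mg"
    and "fg_module scale"
  shows "\<exists>P :: ('g \<times> 'g set) set. finite P \<and>
           (\<forall>(\<delta>, E)\<in>P. E \<subseteq> range deg \<and> lin_indep E) \<and>
           graded_supp Mg = (\<Union>(\<delta>, E)\<in>P. (\<lambda>x. \<delta> + x) ` submonoid_gen E)"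
proof -
  note gm = assms(2)
  interpret M: module scale using gm unfolding graded_module_def by blast
  have hom: "\<And>\<gamma> \<delta> b x. b \<in> hom_poly deg \<gamma> \<Longrightarrow> x \<in> Mg \<delta> \<Longrightarrow> scale b x \<in> Mg (\<gamma> + \<delta>)"
    using gm unfolding graded_module_def by blast
  have dec: "\<And>x. \<exists>!f. finite {\<gamma>. f \<gamma> \<noteq> 0} \<and> (\<forall>\<gamma>. f \<gamma> \<in> Mg \<gamma>) \<and> x = (\<Sum>\<gamma>\<in>{\<gamma>. f \<gamma> \<noteq> 0}. f \<gamma>)"
    using gm unfolding graded_module_def by blast
  obtain X where X: "finite X" "M.span X = UNIV" using assms(3) unfolding fg_module_def by blast
  define comp where "comp x = (THE f. finite {\<gamma>. f \<gamma> \<noteq> 0} \<and> (\<forall>\<gamma>. f \<gamma> \<in> Mg \<gamma>) \<and> x = (\<Sum>\<gamma>\<in>{\<gamma>. f \<gamma> \<noteq> 0}. f \<gamma>))" for x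
  have comp: "finite {\<gamma>. comp x \<gamma> \<noteq> 0} \<and> (\<forall>\<gamma>. comp x \<gamma> \<in> Mg \<gamma>) \<and> x = (\<Sum>\<gamma>\<in>{\<gamma>. comp x \<gamma> \<noteq> 0}. comp x \<gamma>)" for x
    unfolding comp_def by (rule theI'[OF dec])
  define H where "H = (\<Union>x\<in>X. comp x ` {\<gamma>. comp x \<gamma> \<noteq> 0})"
  have finH: "finite H" unfolding H_def using X(1) comp by blast
  have Hex: "\<exists>\<gamma>. h \<in> Mg \<gamma>" if "h \<in> H" for h using that comp unfolding H_def by blast
  define dg where "dg h = (SOME \<gamma>. h \<in> Mg \<gamma>)" for h
  have dg: "h \<in> Mg (dg h)" if "h \<in> H" for h unfolding dg_def using Hex[OF that] by (rule someI_ex)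
  have spanH: "M.span H = UNIV"
  proof -
    have "X \<subseteq> M.span H"
    proof
      fix x assume "x \<in> X"
      then have "comp x \<gamma> \<in> M.span H" if "comp x \<gamma> \<noteq> 0" for \<gamma>
        using that unfolding H_def by (intro M.span_base) blast
      then have "(\<Sum>\<gamma>\<in>{\<gamma>. comp x \<gamma> \<noteq> 0}. comp x \<gamma>) \<in> M.span H"
        by (intro M.span_sum) simp
      then show "x \<in> M.span H" using comp[of x] by simp
    qed
    then have "M.span X \<subseteq> M.span H" by (intro M.span_minimal) auto
    then show ?thesis using X(2) by auto
  qed
  define mono where "mono t = Poly_Mapping.single (Abs_poly_mapping t) (1::'a)" for t :: "'v \<Rightarrow> nat"
  define S where "S h = {t. scale (mono t) h \<noteq> 0}" for h
  have dcS: "s \<in> S h" if "t \<in> S h" "s \<le> t" for h s t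
  proof (rule ccontr)
    assume "s \<notin> S h"
    then have s0: "scale (mono s) h = 0" by (simp add: S_def)
    have "Abs_poly_mapping (\<lambda>v. t v - s v) + Abs_poly_mapping s = Abs_poly_mapping t"
      by (rule poly_mapping_eqI) (use \<open>s \<le> t\<close> in \<open>simp add: lookup_add le_fun_def\<close>)
    then have "mono (\<lambda>v. t v - s v) * mono s = mono t"
      by (simp add: mono_def mult_single)
    then have "scale (mono t) h = scale (mono (\<lambda>v. t v - s v)) (scale (mono s) h)"
      by simp
    then have "scale (mono t) h = 0" using s0 by simp
    then show False using that(1) by (simp add: S_def)
  qed
  have mdm: "mdeg deg (Abs_poly_mapping t) = md deg t" for t using mdeg_md[of deg "Abs_poly_mapping t"] by simp
  have eq: "graded_supp Mg = (\<Union>h\<in>H. (\<lambda>x. dg h + x) ` (md deg ` S h))"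
  proof
    show "(\<Union>h\<in>H. (\<lambda>x. dg h + x) ` (md deg ` S h)) \<subseteq> graded_supp Mg"
    proof safe
      fix h t assume hH: "h \<in> H" and t: "t \<in> S h"
      have "mono t \<in> hom_poly deg (md deg t)" unfolding mono_def using single_hom[of "Abs_poly_mapping t" 1 deg] mdm by simp
      then have "scale (mono t) h \<in> Mg (md deg t + dg h)" using hom dg[OF hH] by blast
      moreover have "scale (mono t) h \<noteq> 0" using t by (simp add: S_def)
      ultimately have "Mg (md deg t + dg h) \<noteq> {0}" by blast
      then show "dg h + md deg t \<in> graded_supp Mg" by (simp add: graded_supp_def add.commute)
    qed
  next
    show "graded_supp Mg \<subseteq> (\<Union>h\<in>H. (\<lambda>x. dg h + x) ` (md deg ` S h))"
    proof
      fix \<gamma>0 assume "\<gamma>0 \<in> graded_supp Mg"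
      then have "Mg \<gamma>0 \<noteq> {0}" by (simp add: graded_supp_def)
      moreover have "0 \<in> Mg \<gamma>0" using gm unfolding graded_module_def by simp
      ultimately obtain y where y: "y \<in> Mg \<gamma>0" "y \<noteq> 0" by blast
      show "\<gamma>0 \<in> (\<Union>h\<in>H. (\<lambda>x. dg h + x) ` (md deg ` S h))"
      proof (rule ccontr)
        assume nin: "\<gamma>0 \<notin> (\<Union>h\<in>H. (\<lambda>x. dg h + x) ` (md deg ` S h))"
        have "y \<in> M.span H" using spanH by simp
        then obtain u where u: "y = (\<Sum>h\<in>H. scale (u h) h)" using M.span_finite[OF finH] by blast
        define I where "I = (SIGMA h:H. Poly_Mapping.keys (u h))"
        define z where "z = (\<lambda>(h,k). scale (Poly_Mapping.single k (Poly_Mapping.lookup (u h) k)) h)"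
        define g where "g = (\<lambda>(h,k). mdeg deg k + dg h)"
        have finI: "finite I" unfolding I_def using finH by (intro finite_SigmaI) auto
        have "y = (\<Sum>h\<in>H. \<Sum>k\<in>Poly_Mapping.keys (u h). scale (Poly_Mapping.single k (Poly_Mapping.lookup (u h) k)) h)"
        proof -
          have "scale (u h) h = (\<Sum>k\<in>Poly_Mapping.keys (u h). scale (Poly_Mapping.single k (Poly_Mapping.lookup (u h) k)) h)" for h
            by (subst poly_sum_single[of "u h"]) (simp only: M.scale_sum_left)
          then show ?thesis using u by simp
        qed
        also have "\<dots> = (\<Sum>i\<in>I. z i)" unfolding I_def z_def
          by (rule sum.Sigma) (use finH in auto)
        finally have ysum: "y = (\<Sum>i\<in>I. z i)" .
        have zM: "\<forall>i\<in>I. z i \<in> Mg (g i)"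
        proof
          fix i assume "i \<in> I"
          then obtain h k where i: "i = (h,k)" "h \<in> H" unfolding I_def by blast
          show "z i \<in> Mg (g i)" unfolding i z_def g_def using hom[OF single_hom dg[OF i(2)]] by simp
        qed
        have z0: "\<forall>i\<in>I. g i = \<gamma>0 \<longrightarrow> z i = 0"
        proof (intro ballI impI)
          fix i assume iI: "i \<in> I" and gi0: "g i = \<gamma>0"
          obtain h k where ihk: "i = (h,k)" by (cases i)
          have hk: "(h,k) \<in> I" and gi: "g (h,k) = \<gamma>0" using iI gi0 ihk by auto
          have hH: "h \<in> H" using hk unfolding I_def by blast
          have "Poly_Mapping.lookup k \<notin> S h"
          proof
            assume "Poly_Mapping.lookup k \<in> S h"
            then have "dg h + md deg (Poly_Mapping.lookup k) \<in> (\<Union>h\<in>H. (\<lambda>x. dg h + x) ` (md deg ` S h))"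
              using hH by blast
            moreover have "dg h + md deg (Poly_Mapping.lookup k) = \<gamma>0"
              using gi mdeg_md[of deg k] by (simp add: g_def add.commute)
            ultimately show False using nin by simp
          qed
          then have k0: "scale (Poly_Mapping.single k 1) h = 0" by (simp add: S_def mono_def)
          have "Poly_Mapping.single 0 (Poly_Mapping.lookup (u h) k) * Poly_Mapping.single k 1
              = Poly_Mapping.single k (Poly_Mapping.lookup (u h) k)" by (simp add: mult_single)
          then have "z (h,k) = scale (Poly_Mapping.single 0 (Poly_Mapping.lookup (u h) k)) (scale (Poly_Mapping.single k 1) h)"
            unfolding z_def by (simp add: M.scale_scale)
          then show "z i = 0" using k0 ihk by simp
        qed
        have "y = 0" by (rule graded_proj[OF gm finI y(1) ysum zM z0])
        then show False using y(2) by simp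
      qed
    qed
  qed
  have "good deg (\<Union>h\<in>H. (\<lambda>x. dg h + x) ` (md deg ` S h))"
  proof (rule good_UN[OF finH])
    fix h assume "h \<in> H"
    have "good deg (md deg ` S h)" by (rule downclosed_good) (rule dcS)
    then show "good deg ((\<lambda>x. dg h + x) ` (md deg ` S h))" by (rule good_translate)
  qed
  then show ?thesis using eq unfolding good_def by simp
qed


end
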